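(* For every integer $x\geq 3$ and each $i\in[1,8]$, there exists a $D_i$-decomposition of the digraph $K^*_{(2x)\times 7}-xK^*_{7,7}$, i.e.\ of the digraph with vertex set $H_1\cup\dots\cup H_{2x}$ (pairwise disjoint sets $H_j$ with $|H_j|=7$) whose arcs are all $(a,b)$ with $a\in H_j$, $b\in H_k$, $j\neq k$, except those with $\{j,k\}=\{2m-1,2m\}$ for some $m\in[1,x]$.
   Context: For a simple graph $G$, $G^*$ is the digraph with vertex set $V(G)$ and arc set $\bigcup_{\{x,y\}\in E(G)}\{(x,y),(y,x)\}$. $K_{r\times s}$ is the complete multipartite simple graph with $r$ parts each of size $s$, $K^*_{r\times s}=(K_{r\times s})^*$, and $K^*_{7,7}=(K_{7,7})^*$. A $D$-decomposition of a digraph $K$ is a set of subdigraphs of $K$, each isomorphic to $D$, such that every arc of $K$ lies in exactly one of them. For distinct vertices $v_0,\dots,v_6$, the digraphs $D_i[v_0,v_1,\dots,v_6]$ ($i\in[1,8]$) all have vertex set $\{v_0,\dots,v_6\}$ and the following arc sets: $D_1$: $(v_1,v_0),(v_1,v_2),(v_2,v_3),(v_3,v_4),(v_4,v_5),(v_5,v_6),(v_6,v_0)$; $D_2$: $(v_1,v_0),(v_2,v_1),(v_2,v_3),(v_3,v_4),(v_4,v_5),(v_5,v_6),(v_6,v_0)$; $D_3$: $(v_1,v_0),(v_1,v_2),(v_3,v_2),(v_3,v_4),(v_4,v_5),(v_5,v_6),(v_6,v_0)$; $D_4$: $(v_1,v_0),(v_1,v_2),(v_2,v_3),(v_4,v_3),(v_4,v_5),(v_5,v_6),(v_6,v_0)$;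 $D_5$: $(v_1,v_0),(v_2,v_1),(v_3,v_2),(v_3,v_4),(v_4,v_5),(v_5,v_6),(v_6,v_0)$; $D_6$: $(v_1,v_0),(v_2,v_1),(v_2,v_3),(v_3,v_4),(v_5,v_4),(v_5,v_6),(v_6,v_0)$; $D_7$: $(v_1,v_0),(v_1,v_2),(v_3,v_2),(v_3,v_4),(v_4,v_5),(v_6,v_5),(v_6,v_0)$; $D_8$: $(v_1,v_0),(v_2,v_1),(v_2,v_3),(v_4,v_3),(v_4,v_5),(v_5,v_6),(v_6,v_0)$. $D_i$ also denotes the isomorphism type of $D_i[v_0,\dots,v_6]$. *)

theory Defs
  imports Main
begin

type_synonym 'a digraph = "'a set \<times> ('a \<times> 'a) set"

definition verts :: "'a digraph \<Rightarrow> 'a set" where "verts G = fst G"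
definition arcs :: "'a digraph \<Rightarrow> ('a \<times> 'a) set" where "arcs G = snd G"

definition digraph_iso :: "'a digraph \<Rightarrow> 'b digraph \<Rightarrow> bool" where
  "digraph_iso G H \<longleftrightarrow> (\<exists>f. bij_betw f (verts G) (verts H) \<and>
       (\<lambda>(u,v). (f u, f v)) ` arcs G = arcs H)"

definition subdigraph :: "'a digraph \<Rightarrow> 'a digraph \<Rightarrow> bool" where
  "subdigraph S K \<longleftrightarrow> verts S \<subseteq> verts K \<and> arcs S \<subseteq> arcs K \<and>
       arcs S \<subseteq> verts S \<times> verts S"

definition is_decomposition :: "'b digraph \<Rightarrow> 'a digraph \<Rightarrow> 'a digraph set \<Rightarrow> bool" where
  "is_decomposition D K \<D> \<longleftrightarrow>
     (\<forall>S\<in>\<D>. subdigraph S K \<and> digraph_iso S D) \<and>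
     (\<forall>a\<in>arcs K. \<exists>!S. S \<in> \<D> \<and> a \<in> arcs S)"

text \<open>Arc sets of D_1,...,D_8 on vertices v_0..v_6 represented by 0..6.\<close>
definition D_arcs :: "nat \<Rightarrow> (nat \<times> nat) set" where
  "D_arcs i = (if i = 1 then {(1,0),(1,2),(2,3),(3,4),(4,5),(5,6),(6,0)}
    else if i = 2 then {(1,0),(2,1),(2,3),(3,4),(4,5),(5,6),(6,0)}
    else if i = 3 then {(1,0),(1,2),(3,2),(3,4),(4,5),(5,6),(6,0)}
    else if i = 4 then {(1,0),(1,2),(2,3),(4,3),(4,5),(5,6),(6,0)}
    else if i = 5 then {(1,0),(2,1),(3,2),(3,4),(4,5),(5,6),(6,0)}
    else if i = 6 then {(1,0),(2,1),(2,3),(3,4),(5,4),(5,6),(6,0)}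
    else if i = 7 then {(1,0),(1,2),(3,2),(3,4),(4,5),(6,5),(6,0)}
    else {(1,0),(2,1),(2,3),(4,3),(4,5),(5,6),(6,0)})"

definition Dgraph :: "nat \<Rightarrow> nat digraph" where
  "Dgraph i = ({0..<7}, D_arcs i)"

text \<open>K*_{(2x) x 7} - x K*_{7,7}: part H_{j+1} = {j} x {0..<7} for j < 2x (0-indexed);
  the removed pairs of parts are {H_{2m-1}, H_{2m}}, i.e. 0-indexed j, k with j div 2 = k div 2.\<close>
definition K_minus :: "nat \<Rightarrow> (nat \<times> nat) digraph" where
  "K_minus x = ({0..<2*x} \<times> {0..<7},
     {((j,s),(k,t)). j < 2*x \<and> k < 2*x \<and> s < 7 \<and> t < 7 \<and> j \<noteq> k \<and> j div 2 \<noteq> k div 2})"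

end

theory Submission
  imports Defs
begin

lemma modeq_int: "(a::nat) mod y = b mod y \<longleftrightarrow> int y dvd int a - int b"
proof -
  have "(a mod y = b mod y) = (int a mod int y = int b mod int y)"
    by (simp add: zmod_int[symmetric])
  also have "\<dots> = (int y dvd int a - int b)" by (rule mod_eq_dvd_iff)
  finally show ?thesis .
qed

lemma odd_dvd2: "odd (y::nat) \<Longrightarrow> int y dvd 2 * z \<Longrightarrow> int y dvd z"
proof -
  assume "odd y" "int y dvd 2 * z"
  have "coprime (int y) 2" using \<open>odd y\<close> by simp
  thus ?thesis using \<open>int y dvd 2 * z\<close> coprime_dvd_mult_right_iff by blast
qed

lemma small_dvd: "int y dvd (z::int) \<Longrightarrow> \<bar>z\<bar> < int y \<Longrightarrow> z = 0"
proof (rule ccontr)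
  assume "int y dvd z" "\<bar>z\<bar> < int y" "z \<noteq> 0"
  hence "\<bar>int y\<bar> \<le> \<bar>z\<bar>" using dvd_imp_le_int by blast
  thus False using \<open>\<bar>z\<bar> < int y\<close> by simp
qed

lemma dvd_diff12: "odd y \<Longrightarrow> a \<le> 2 \<Longrightarrow> b \<le> 2 \<Longrightarrow> a \<noteq> (b::nat) \<Longrightarrow> int y dvd (int a - int b) * z \<Longrightarrow> int y dvd z"
proof -
  assume as: "odd y" "a \<le> 2" "b \<le> 2" "a \<noteq> b" "int y dvd (int a - int b) * z"
  have "int a - int b = 1 \<or> int a - int b = -1 \<or> int a - int b = 2 \<or> int a - int b = -2" using as(2-4) by linarith
  moreover have "int y dvd 2 * z" if "int a - int b = 2 \<or> int a - int b = -2"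
    using that as(5) by (metis dvd_minus_iff mult_minus_left)
  moreover have "int y dvd z" if "int a - int b = 1 \<or> int a - int b = -1"
    using that as(5) by (metis dvd_minus_iff mult_minus_left mult_1)
  ultimately show ?thesis using odd_dvd2[OF as(1)] by blast
qed

lemma L1:
  assumes "odd y" "0 < r" "r < y" "a \<le> 2" "b \<le> 2" "a \<noteq> b"
  shows "(u + a*r) mod y \<noteq> (u + b*r) mod (y::nat)"
proof
  assume "(u + a*r) mod y = (u + b*r) mod y"
  hence "int y dvd (int a - int b) * int r" unfolding modeq_int by (simp add: algebra_simps)
  hence "int y dvd int r" using dvd_diff12 assms by blast
  hence "int r = 0" using small_dvd[of y "int r"] assms by simp
  thus False using assms by simp
qed

lemma L2:
  assumes "odd y" "a \<le> 2" "b \<le> 2" "a \<noteq> b" "r1 < y" "r2 < y" "u1 < y" "u2 < (y::nat)"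
    "(u1 + a*r1) mod y = (u2 + a*r2) mod y" "(u1 + b*r1) mod y = (u2 + b*r2) mod y"
  shows "r1 = r2 \<and> u1 = u2"
proof -
  have d1: "int y dvd (int u1 + int a * int r1) - (int u2 + int a * int r2)"
    using assms(9) unfolding modeq_int by simp
  have d2: "int y dvd (int u1 + int b * int r1) - (int u2 + int b * int r2)"
    using assms(10) unfolding modeq_int by simp
  have "int y dvd ((int u1 + int a * int r1) - (int u2 + int a * int r2)) - ((int u1 + int b * int r1) - (int u2 + int b * int r2))"
    using d1 d2 by (rule dvd_diff)
  hence "int y dvd (int a - int b) * (int r1 - int r2)" by (simp add: algebra_simps)
  hence "int y dvd (int r1 - int r2)" using dvd_diff12 assms(1-4) by blast
  hence "int r1 - int r2 = 0" using small_dvd[of y "int r1 - int r2"] assms(5,6) by simp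
  hence r: "r1 = r2" by simp
  hence "int y dvd int u1 - int u2" using d1 by simp
  hence "int u1 - int u2 = 0" using small_dvd[of y "int u1 - int u2"] assms(7,8) by simp
  thus ?thesis using r by simp
qed

lemma solve2:
  assumes "odd y" "0 < T" "T < int y"
  shows "\<exists>r::nat. 0 < r \<and> r < y \<and> int y dvd 2 * int r - T"
proof (cases "even T")
  case True
  then obtain k where k: "T = 2 * k" by blast
  show ?thesis
    apply (rule exI[of _ "nat k"]) using k assms by auto
next
  case False
  hence "even (T + int y)" using assms(1) by simp
  then obtain k where k: "T + int y = 2 * k" by blast
  have "2 * int (nat k) - T = int y" using k assms by simp
  hence "int y dvd 2 * int (nat k) - T" by simp
  moreover have "0 < nat k" "nat k < y" using k assms by auto
  ultimately show ?thesis by blast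
qed

lemma solve12:
  assumes "odd y" "0 < T" "T < int y" "d = 1 \<or> d = (2::int)"
  shows "\<exists>r::nat. 0 < r \<and> r < y \<and> int y dvd d * int r - T"
proof (cases "d = 1")
  case True
  have "int (nat T) = T" using assms by simp
  hence "0 < nat T \<and> nat T < y \<and> int y dvd d * int (nat T) - T" using True assms by simp
  thus ?thesis by blast
next
  case False
  hence "d = 2" using assms(4) by simp
  thus ?thesis using solve2[OF assms(1-3)] by simp
qed

lemma L3:
  assumes "odd y" "a \<le> 2" "b \<le> 2" "a \<noteq> b" "g1 < y" "g2 < (y::nat)" "g1 \<noteq> g2"
  shows "\<exists>r u. 0 < r \<and> r < y \<and> u < y \<and> (u + a*r) mod y = g1 \<and> (u + b*r) mod y = g2"
proof -
  define D where "D = (int g2 - int g1) mod int y"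
  have y0: "0 < int y" using assms by simp
  have D0: "0 \<le> D" "D < int y" unfolding D_def using y0 by auto
  have Dd: "int y dvd D - (int g2 - int g1)" unfolding D_def by (simp add: mod_eq_dvd_iff[symmetric])
  have "D \<noteq> 0"
  proof
    assume "D = 0"
    hence "int y dvd -(int g2 - int g1)" using Dd by simp
    hence "int y dvd int g2 - int g1" by (simp only: dvd_minus_iff)
    hence "int g2 - int g1 = 0" using small_dvd[of y "int g2 - int g1"] assms(5,6) by simp
    thus False using assms(7) by simp
  qed
  hence D1: "0 < D" using D0 by simp
  obtain r where r: "0 < r" "r < y" "int y dvd (int b - int a) * int r - D"
  proof (cases "a < b")
    case True
    hence "int b - int a = 1 \<or> int b - int a = 2" using assms(2,3) by linarith
    then show ?thesis using solve12[OF assms(1) D1 D0(2)] that by blast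
  next
    case False
    hence ab: "int a - int b = 1 \<or> int a - int b = 2" using assms(2,3,4) by linarith
    have "0 < int y - D" "int y - D < int y" using D0 D1 by auto
    then obtain r where r: "0 < r" "r < y" "int y dvd (int a - int b) * int r - (int y - D)"
      using solve12[OF assms(1) _ _ ab] by blast
    have "int y dvd ((int a - int b) * int r - (int y - D)) + int y" by (rule dvd_add[OF r(3) dvd_refl])
    hence "int y dvd -((int b - int a) * int r - D)" by (simp add: algebra_simps)
    hence "int y dvd (int b - int a) * int r - D" by (simp only: dvd_minus_iff)
    thus ?thesis using that r(1,2) by blast
  qed
  define U where "U = (int g1 - int a * int r) mod int y"
  have U0: "0 \<le> U" "U < int y" unfolding U_def using y0 by auto
  define u where "u = nat U"
  have uU: "int u = U" unfolding u_def using U0 by simp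
  have "int y dvd U - (int g1 - int a * int r)" unfolding U_def by (simp add: mod_eq_dvd_iff[symmetric])
  hence e1: "int y dvd (int u + int a * int r) - int g1" using uU by (simp add: algebra_simps)
  have "int y dvd ((int u + int a * int r) - int g1) + ((int b - int a) * int r - D) + (D - (int g2 - int g1))"
    by (rule dvd_add[OF dvd_add[OF e1 r(3)] Dd])
  hence e2: "int y dvd (int u + int b * int r) - int g2" by (simp add: algebra_simps)
  have "(u + a*r) mod y = g1 mod y" unfolding modeq_int using e1 by simp
  moreover have "(u + b*r) mod y = g2 mod y" unfolding modeq_int using e2 by simp
  moreover have "u < y" using uU U0 by simp
  ultimately show ?thesis using r(1,2) assms(5,6) by auto
qed


datatype vd = Fin nat nat nat | Inf nat nat
datatype walk = Reg nat nat | Ext nat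

definition alph :: "nat list" where "alph = [0,1,2,1,0,1,2]"

definition darcs :: "nat \<Rightarrow> (nat \<times> nat) list" where
  "darcs i = (if i = 1 then [(1,0), (1,2), (2,3), (3,4), (4,5), (5,6), (6,0)]
    else if i = 2 then [(1,0), (2,1), (2,3), (3,4), (4,5), (5,6), (6,0)]
    else if i = 3 then [(1,0), (1,2), (3,2), (3,4), (4,5), (5,6), (6,0)]
    else if i = 4 then [(1,0), (1,2), (2,3), (4,3), (4,5), (5,6), (6,0)]
    else if i = 5 then [(1,0), (2,1), (3,2), (3,4), (4,5), (5,6), (6,0)]
    else if i = 6 then [(1,0), (2,1), (2,3), (3,4), (5,4), (5,6), (6,0)]
    else if i = 7 then [(1,0), (1,2), (3,2), (3,4), (4,5), (6,5), (6,0)]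
    else [(1,0), (2,1), (2,3), (4,3), (4,5), (5,6), (6,0)])"

definition PAT :: "(nat \<times> nat) list list list" where
  "PAT = [[[(1,4), (0,0), (1,0), (1,5), (1,0), (1,4), (1,3)], [(0,1), (1,6), (1,2), (0,0), (0,5), (1,4), (1,4)], [(1,4), (0,3), (0,3), (1,5), (0,6), (0,5), (0,6)], [(0,1), (1,1), (0,4), (0,1), (0,3), (1,6), (0,5)]], [[(0,2), (0,4), (1,4), (0,6), (0,3), (1,6), (0,2)], [(1,6), (1,3), (1,1), (0,6), (0,1), (0,2), (0,5)], [(1,0), (0,1), (1,2), (1,6), (1,6), (1,4), (0,5)], [(1,3), (1,4), (0,4), (1,2), (0,6), (0,5), (1,2)]], [[(0,1), (0,6), (1,4), (1,2), (0,2), (1,5), (0,3)], [(1,4), (1,3), (1,1), (1,1), (0,4), (0,3), (1,5)], [(0,2), (0,1), (1,2), (0,3), (0,0), (0,0), (1,0)], [(0,1), (1,2), (0,6), (0,3), (1,0), (1,4), (1,0)]], [[(0,3), (1,0), (1,3), (0,0), (1,6), (0,6), (0,5)], [(1,3), (1,3), (0,5), (1,6), (0,3), (1,0), (1,1)], [(1,1), (0,1), (0,5), (0,0), (0,4), (1,6), (1,4)], [(1,3), (0,4), (0,5), (0,5), (1,0), (0,6), (1,4)]], [[(0,5), (1,2), (0,0), (0,6), (0,1), (0,0), (1,6)], [(0,2), (0,6), (0,1), (1,6), (0,4), (1,1), (0,2)], [(1,2), (1,1), (1,3), (1,6), (1,5), (0,5), (1,6)], [(1,6), (1,6), (1,4),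 (0,4), (0,1), (1,4), (0,1)]], [[(1,6), (0,1), (1,4), (0,5), (1,1), (1,5), (0,0)], [(1,0), (0,3), (1,4), (0,2), (1,4), (1,4), (1,3)], [(0,0), (0,1), (0,1), (1,1), (1,6), (1,5), (1,0)], [(0,3), (1,0), (0,6), (0,4), (0,1), (0,6), (0,0)]], [[(1,5), (0,1), (1,6), (1,5), (1,1), (0,0), (0,5)], [(0,5), (0,0), (0,6), (1,3), (1,2), (0,3), (1,5)], [(1,0), (0,4), (0,4), (0,0), (0,3), (1,2), (1,5)], [(1,0), (0,5), (0,6), (1,4), (0,1), (1,2), (1,2)]], [[(1,4), (1,2), (1,2), (1,5), (1,6), (1,3), (0,5)], [(0,2), (0,6), (1,5), (0,3), (0,1), (1,4), (0,3)], [(0,0), (0,2), (1,2), (0,5), (0,5), (1,2), (0,6)], [(1,1), (0,1), (0,4), (1,5), (0,0), (1,2), (1,0)]]]"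

definition JM :: "nat list list" where "JM = [[1, 0, 3, 1], [5, 6, 5, 3], [4, 4, 3, 4], [1, 6, 3, 0], [4, 5, 1, 6], [6, 2, 4, 0], [0, 3, 3, 0], [4, 3, 6, 3]]"

definition INFV :: "(nat \<times> nat) list list" where "INFV = [[(1,4), (1,6), (0,3), (0,4)], [(0,2), (1,6), (1,6), (0,4)], [(1,5), (1,1), (0,0), (0,3)], [(0,3), (1,3), (0,4), (1,4)], [(0,6), (0,2), (1,3), (1,6)], [(1,6), (0,2), (1,1), (0,0)], [(0,1), (1,2), (0,4), (1,2)], [(1,3), (1,5), (0,0), (0,0)]]"

definition EXT :: "vd list list list" where "EXT = [[[Inf 1 5, Fin 0 0 5, Inf 0 3, Fin 0 0 2, Inf 1 3, Fin 1 1 1, Fin 0 0 1], [Inf 0 6, Fin 0 1 2, Inf 0 3, Fin 2 1 4, Fin 0 0 1, Inf 0 5, Fin 0 1 3], [Fin 0 0 1, Fin 1 1 6, Inf 0 4, Fin 0 1 4, Inf 1 3, Fin 0 0 6, Inf 1 2], [Inf 1 4, Fin 0 1 1, Inf 1 2, Fin 0 0 0, Inf 0 3, Fin 1 1 5, Fin 0 0 6], [Fin 0 1 4, Inf 1 5, Fin 0 1 0, Inf 0 6, Fin 0 1 2, Inf 0 2, Fin 1 0 0], [Fin 1 1 5, Inf 0 6, Fin 0 1 3, Inf 1 1, Fin 0 1 2, Inf 1 6, Fin 2 0 3], [Fin 0 0 3, Inf 1 3, Fin 0 0 4, Inf 0 5, Fin 1 0 0, Fin 2 1 0, Inf 0 2],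 [Inf 0 0, Fin 0 0 5, Inf 1 4, Fin 1 1 1, Fin 2 0 4, Inf 1 6, Fin 0 0 1]], [[Fin 0 0 0, Inf 0 1, Fin 0 1 4, Inf 0 6, Fin 2 0 4, Fin 1 1 2, Inf 1 3], [Fin 0 1 5, Inf 0 0, Fin 0 1 4, Inf 1 1, Fin 1 1 2, Fin 0 0 6, Inf 0 1], [Inf 1 2, Fin 0 0 4, Inf 1 4, Fin 2 0 5, Fin 0 1 6, Inf 0 6, Fin 0 0 0], [Inf 0 6, Fin 0 1 0, Inf 0 0, Fin 0 0 3, Fin 1 1 6, Inf 1 2, Fin 0 1 5], [Inf 1 4, Fin 0 0 5, Inf 1 0, Fin 1 1 6, Fin 2 0 2, Inf 0 6, Fin 0 0 3], [Inf 1 4, Fin 0 1 2, Inf 1 0, Fin 1 0 2, Fin 2 0 5, Inf 0 3, Fin 0 1 5], [Fin 0 1 0, Inf 1 3, Fin 0 0 3, Inf 1 6, Fin 1 1 4, Fin 2 0 5, Inf 0 6], [Inf 0 1, Fin 0 1 3, Inf 0 0, Fin 0 1 6, Fin 1 1 4, Inf 1 2, Fin 0 0 5]], [[Inf 0 0, Fin 0 1 2, Inf 1 6, Fin 0 0 2, Fin 1 1 5, Inf 1 0, Fin 0 0 4], [Inf 0 5, Fin 0 0 4, Inf 1 6, Fin 0 1 5, Inf 0 1, Fin 1 0 3, Fin 0 0 0], [Inf 0 2, Fin 0 1 0, Fin 1 1 4, Inf 0 5, Fin 0 0 1, Inf 0 0, Fin 0 1 5], [Inf 1 4, Fin 0 1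 6, Inf 0 0, Fin 1 0 3, Fin 2 1 2, Inf 0 1, Fin 0 1 5], [Fin 0 0 5, Inf 1 2, Fin 1 0 3, Fin 0 0 4, Inf 1 5, Fin 0 1 1, Inf 0 1], [Fin 0 1 6, Inf 0 6, Fin 0 0 5, Inf 1 5, Fin 1 1 2, Fin 0 0 2, Inf 1 0], [Fin 0 0 0, Inf 1 2, Fin 0 1 0, Inf 1 6, Fin 1 1 1, Fin 0 0 4, Inf 0 6], [Inf 1 3, Fin 1 0 3, Fin 0 1 0, Inf 0 4, Fin 0 0 2, Inf 1 1, Fin 0 0 0]], [[Fin 0 0 3, Inf 1 4, Fin 2 1 1, Fin 0 1 3, Inf 0 4, Fin 0 1 6, Inf 1 0], [Fin 0 0 3, Inf 1 1, Fin 0 1 4, Inf 0 0, Fin 0 0 4, Inf 1 5, Fin 1 1 0], [Inf 0 5, Fin 0 0 1, Inf 1 4, Fin 2 1 3, Fin 1 1 0, Inf 1 6, Fin 0 0 0], [Inf 0 1, Fin 0 0 6, Inf 1 5, Fin 0 0 5, Inf 0 3, Fin 0 0 4, Fin 1 0 0], [Inf 0 5, Fin 0 1 3, Inf 0 3, Fin 0 0 6, Inf 1 2, Fin 1 1 0, Fin 2 1 1], [Fin 0 1 3, Inf 0 6, Fin 0 0 5, Inf 1 0, Fin 0 0 2, Inf 1 6, Fin 1 0 4], [Inf 0 2, Fin 0 1 1, Inf 1 6, Fin 0 1 0, Inf 0 6, Fin 2 1 4, Fin 0 1 3], [Fin 1 0 0, Inf 0 2, Fin 0 1 5, Inf 1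 0, Fin 0 1 3, Inf 0 1, Fin 2 0 5]], [[Fin 0 0 1, Inf 1 4, Fin 1 1 1, Fin 0 0 4, Inf 0 3, Fin 0 0 2, Inf 1 2], [Inf 0 3, Fin 0 1 2, Inf 1 1, Fin 0 1 0, Inf 1 6, Fin 0 0 1, Fin 1 0 0], [Inf 1 5, Fin 1 1 1, Fin 2 1 3, Inf 1 6, Fin 0 0 0, Inf 0 1, Fin 0 1 0], [Inf 0 5, Fin 2 0 1, Fin 1 1 4, Inf 1 1, Fin 0 1 6, Inf 0 6, Fin 0 1 0], [Fin 0 1 3, Inf 1 1, Fin 0 0 6, Inf 0 4, Fin 2 0 1, Fin 0 1 6, Inf 0 5], [Inf 1 5, Fin 0 0 1, Inf 0 3, Fin 1 1 1, Fin 2 0 2, Inf 0 4, Fin 0 0 0], [Fin 0 1 3, Inf 0 3, Fin 0 1 0, Inf 0 5, Fin 1 1 1, Fin 0 1 2, Inf 0 6], [Inf 1 2, Fin 0 0 1, Fin 1 0 6, Inf 1 6, Fin 0 0 4, Inf 1 0, Fin 0 0 3]], [[Fin 0 1 0, Inf 0 4, Fin 1 1 5, Fin 0 1 6, Inf 0 0, Fin 0 1 2, Inf 1 1], [Fin 0 0 3, Inf 0 0, Fin 0 0 4, Inf 1 2, Fin 0 1 4, Inf 0 2, Fin 1 1 0], [Fin 2 0 0, Inf 1 4, Fin 0 0 3, Inf 1 3, Fin 0 1 6, Inf 0 5, Fin 1 1 5], [Inf 0 6, Fin 0 0 5, Inf 1 1, Fin 2 0 0, Fin 0 1 6, Inf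 0 2, Fin 0 0 1], [Fin 0 0 4, Inf 1 2, Fin 0 0 3, Inf 0 0, Fin 1 0 2, Fin 2 1 4, Inf 0 6], [Inf 0 2, Fin 0 1 6, Inf 1 1, Fin 0 0 6, Inf 0 1, Fin 2 1 4, Fin 1 0 3], [Fin 0 0 3, Fin 2 0 0, Inf 1 0, Fin 0 1 1, Inf 1 3, Fin 0 1 5, Inf 1 2], [Fin 0 1 6, Fin 1 1 1, Inf 0 2, Fin 0 0 6, Inf 1 3, Fin 0 0 0, Inf 1 2]], [[Fin 0 1 3, Inf 1 4, Fin 0 1 5, Fin 1 0 1, Inf 0 6, Fin 0 0 2, Inf 1 1], [Fin 0 1 3, Inf 0 3, Fin 2 0 4, Fin 1 0 0, Inf 0 6, Fin 0 1 4, Inf 0 1], [Fin 2 0 6, Inf 1 1, Fin 0 0 3, Inf 0 5, Fin 0 0 0, Inf 1 6, Fin 1 1 3], [Fin 0 0 3, Fin 1 0 0, Inf 1 0, Fin 0 0 5, Inf 1 1, Fin 0 0 4, Inf 1 4], [Inf 1 3, Fin 0 1 1, Inf 0 4, Fin 0 1 4, Inf 1 2, Fin 0 1 0, Fin 1 0 5], [Inf 0 0, Fin 0 1 1, Inf 1 0, Fin 1 1 3, Fin 0 1 2, Inf 0 4, Fin 0 1 6], [Inf 1 3, Fin 2 1 2, Fin 0 1 0, Inf 0 3, Fin 0 0 0, Inf 0 4, Fin 0 0 2], [Fin 0 1 5, Inf 0 4, Fin 0 1 3, Inf 1 6, Fin 0 1 2, Inf 0 6, Fin 2 0 5]], [[Fin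 0 0 4, Inf 1 4, Fin 0 1 6, Fin 1 1 3, Inf 1 5, Fin 0 0 1, Inf 0 3], [Inf 0 1, Fin 1 1 5, Fin 2 0 4, Inf 0 2, Fin 0 1 3, Inf 0 0, Fin 0 1 6], [Inf 1 2, Fin 0 0 4, Inf 1 3, Fin 0 0 0, Inf 1 1, Fin 2 1 5, Fin 1 0 3], [Fin 2 0 6, Fin 1 1 2, Inf 0 4, Fin 0 0 2, Inf 0 0, Fin 0 1 0, Inf 1 4], [Fin 1 1 5, Inf 1 6, Fin 0 1 4, Inf 0 4, Fin 0 1 3, Inf 1 2, Fin 0 0 0], [Fin 0 1 5, Inf 0 2, Fin 0 0 1, Fin 1 0 3, Inf 0 0, Fin 0 0 4, Inf 1 4], [Fin 1 1 5, Inf 1 2, Fin 0 0 0, Inf 1 1, Fin 0 0 5, Inf 0 4, Fin 0 1 6], [Inf 1 3, Fin 0 1 2, Inf 0 1, Fin 0 0 0, Fin 2 0 6, Inf 0 3, Fin 0 1 0]]]"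

definition pat :: "nat \<Rightarrow> nat \<Rightarrow> nat \<Rightarrow> nat \<times> nat" where "pat i c k = PAT ! (i - 1) ! c ! k"
definition jm :: "nat \<Rightarrow> nat \<Rightarrow> nat" where "jm i c = JM ! (i - 1) ! c"
definition infv :: "nat \<Rightarrow> nat \<Rightarrow> nat \<times> nat" where "infv i c = INFV ! (i - 1) ! c"
definition ext :: "nat \<Rightarrow> nat \<Rightarrow> nat \<Rightarrow> vd" where "ext i n k = EXT ! (i - 1) ! n ! k"

fun vdesc :: "nat \<Rightarrow> bool \<Rightarrow> walk \<Rightarrow> nat \<Rightarrow> vd" where
  "vdesc i fl (Reg r c) k = (if fl \<and> r = 1 \<and> k = jm i c then Inf (fst (infv i c)) (snd (infv i c))
        else Fin (alph ! k * r) (fst (pat i c k)) (snd (pat i c k)))"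
| "vdesc i fl (Ext n) k = ext i n k"

fun isInf :: "vd \<Rightarrow> bool" where "isInf (Inf b e) = True" | "isInf (Fin x b e) = False"
fun vb :: "vd \<Rightarrow> nat" where "vb (Inf b e) = b" | "vb (Fin x b e) = b"
fun ve :: "vd \<Rightarrow> nat" where "ve (Inf b e) = e" | "ve (Fin x b e) = e"
fun vok :: "vd \<Rightarrow> bool" where "vok (Inf b e) = (b < 2 \<and> e < 7)" | "vok (Fin x b e) = (b < 2 \<and> e < 7)"

definition dlab :: "vd \<Rightarrow> vd \<Rightarrow> nat \<times> nat \<times> nat" where
  "dlab v w = (vb v, vb w, (ve w + 7 - ve v) mod 7)"

definition regs :: "nat \<Rightarrow> (nat \<times> nat \<times> nat) list" where
  "regs i = concat (map (\<lambda>c. map (\<lambda>(a,b). (c,a,b)) (darcs i)) [0..<4])"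
definition rlab :: "nat \<Rightarrow> nat \<times> nat \<times> nat \<Rightarrow> nat \<times> nat \<times> nat" where
  "rlab i cab = (case cab of (c,a,b) \<Rightarrow> dlab (Fin 0 (fst (pat i c a)) (snd (pat i c a))) (Fin 0 (fst (pat i c b)) (snd (pat i c b))))"

definition alllabs :: "(nat \<times> nat \<times> nat) list" where
  "alllabs = concat (map (\<lambda>b1. concat (map (\<lambda>b2. map (\<lambda>d. (b1,b2,d)) [0..<7]) [0..<2])) [0..<2])"

definition spw :: "walk list" where "spw = map (\<lambda>c. Reg 1 c) [0..<4] @ map Ext [0..<8]"
definition specs :: "nat \<Rightarrow> (walk \<times> nat \<times> nat) list" where
  "specs i = concat (map (\<lambda>w. map (\<lambda>(a,b). (w,a,b)) (darcs i)) spw)"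
definition outs :: "nat \<Rightarrow> (walk \<times> nat \<times> nat) list" where
  "outs i = filter (\<lambda>(w,a,b). isInf (vdesc i True w a)) (specs i)"
definition ins :: "nat \<Rightarrow> (walk \<times> nat \<times> nat) list" where
  "ins i = filter (\<lambda>(w,a,b). isInf (vdesc i True w b)) (specs i)"
definition slab :: "nat \<Rightarrow> walk \<times> nat \<times> nat \<Rightarrow> nat \<times> nat \<times> nat" where
  "slab i wab = (case wab of (w,a,b) \<Rightarrow> dlab (vdesc i True w a) (vdesc i True w b))"
definition efin :: "nat \<Rightarrow> (nat \<times> nat \<times> nat) list" where
  "efin i = filter (\<lambda>(n,a,b). \<not> isInf (ext i n a) \<and> \<not> isInf (ext i n b))
     (concat (map (\<lambda>n. map (\<lambda>(a,b). (n,a,b)) (darcs i)) [0..<8]))"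

definition released :: "nat \<Rightarrow> nat \<Rightarrow> nat \<Rightarrow> nat \<Rightarrow> bool" where
  "released i c a b = (a = jm i c \<or> b = jm i c)"

definition good1 :: "nat \<Rightarrow> bool" where
  "good1 i = ((\<forall>(a,b)\<in>set (darcs i). a < 7 \<and> b < 7 \<and> alph ! a \<noteq> alph ! b))"

definition good2 :: "nat \<Rightarrow> bool" where
  "good2 i = ((\<forall>c\<in>set [0..<4]. \<forall>k\<in>set [0..<7]. fst (pat i c k) < 2 \<and> snd (pat i c k) < 7))"

definition good3 :: "nat \<Rightarrow> bool" where
  "good3 i = ((\<forall>c\<in>set [0..<4]. \<forall>k\<in>set [0..<7]. \<forall>l\<in>set [0..<7]. k \<noteq> l \<and> pat i c k = pat i c l \<longrightarrow> alph ! k \<noteq> alph ! l))"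

definition good4 :: "nat \<Rightarrow> bool" where
  "good4 i = (distinct (map (rlab i) (regs i)))"

definition good5 :: "nat \<Rightarrow> bool" where
  "good5 i = (set alllabs \<subseteq> set (map (rlab i) (regs i)))"

definition good6 :: "nat \<Rightarrow> bool" where
  "good6 i = ((\<forall>c\<in>set [0..<4]. jm i c < 7 \<and> fst (infv i c) < 2 \<and> snd (infv i c) < 7))"

definition good7 :: "nat \<Rightarrow> bool" where
  "good7 i = ((\<forall>n\<in>set [0..<8]. \<forall>k\<in>set [0..<7]. vok (ext i n k)))"

definition good8 :: "nat \<Rightarrow> bool" where
  "good8 i = ((\<forall>n\<in>set [0..<8]. \<forall>k\<in>set [0..<7]. \<forall>l\<in>set [0..<7]. k \<noteq> l \<longrightarrow> (vb (ext i n k), ve (ext i n k)) \<noteq> (vb (ext i n l), ve (ext i n l))))"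

definition good9 :: "nat \<Rightarrow> bool" where
  "good9 i = ((\<forall>(n,a,b)\<in>set (efin i). \<exists>c\<in>set [0..<4]. \<exists>(a',b')\<in>set (darcs i). released i c a' b' \<and>
        ext i n a = Fin (alph ! a') (fst (pat i c a')) (snd (pat i c a')) \<and>
        ext i n b = Fin (alph ! b') (fst (pat i c b')) (snd (pat i c b'))))"

definition good10 :: "nat \<Rightarrow> bool" where
  "good10 i = ((\<forall>c\<in>set [0..<4]. \<forall>(a',b')\<in>set (darcs i). released i c a' b' \<longrightarrow> (\<exists>(n,a,b)\<in>set (efin i).
        ext i n a = Fin (alph ! a') (fst (pat i c a')) (snd (pat i c a')) \<and>
        ext i n b = Fin (alph ! b') (fst (pat i c b')) (snd (pat i c b')))))"

definition good11 :: "nat \<Rightarrow> bool" where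
  "good11 i = (distinct (map (\<lambda>(n,a,b). (ext i n a, ext i n b)) (efin i)))"

definition good12 :: "nat \<Rightarrow> bool" where
  "good12 i = ((\<forall>(w,a,b)\<in>set (specs i). \<not> (isInf (vdesc i True w a) \<and> isInf (vdesc i True w b))))"

definition good13 :: "nat \<Rightarrow> bool" where
  "good13 i = (distinct (map (slab i) (outs i)))"

definition good14 :: "nat \<Rightarrow> bool" where
  "good14 i = (set alllabs \<subseteq> set (map (slab i) (outs i)))"

definition good15 :: "nat \<Rightarrow> bool" where
  "good15 i = (distinct (map (slab i) (ins i)))"

definition good16 :: "nat \<Rightarrow> bool" where
  "good16 i = (set alllabs \<subseteq> set (map (slab i) (ins i)))"

definition good :: "nat \<Rightarrow> bool" where
  "good i = (good1 i \<and> good2 i \<and> good3 i \<and> good4 i \<and> good5 i \<and> good6 i \<and> good7 i \<and> good8 i \<and> good9 i \<and> good10 i \<and> good11 i \<and> good12 i \<and> good13 i \<and> good14 i \<and> good15 i \<and> good16 i)"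

lemma good_all: "list_all good [1..<9]"
  by code_simp


lemma two_b: "b < 2 \<Longrightarrow> b' < 2 \<Longrightarrow> (2*g + b = 2*g' + (b'::nat)) = (g = g' \<and> b = b')"
  by arith

lemma Y1: "u1 < y \<Longrightarrow> u2 < y \<Longrightarrow> (u1 + \<beta>) mod y = (u2 + \<beta>) mod y \<Longrightarrow> u1 = (u2::nat)"
proof -
  assume as: "u1 < y" "u2 < y" "(u1 + \<beta>) mod y = (u2 + \<beta>) mod y"
  hence "int y dvd int u1 - int u2" unfolding modeq_int by simp
  hence "int u1 - int u2 = 0" using small_dvd[of y "int u1 - int u2"] as(1,2) by simp
  thus ?thesis by simp
qed

lemma m7_4: "t1 < 7 \<Longrightarrow> t2 < 7 \<Longrightarrow> (t1 + e) mod 7 = (t2 + e) mod 7 \<Longrightarrow> t1 = (t2::nat)"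
  using Y1 by blast

lemma m7_3: "(t1 + e1) mod 7 = (t2 + e2) mod 7 \<Longrightarrow> (t1 + f1) mod 7 = (t2 + f2) mod 7 \<Longrightarrow>
   e1 < 7 \<Longrightarrow> e2 < 7 \<Longrightarrow> f1 < 7 \<Longrightarrow> f2 < 7 \<Longrightarrow> t1 < 7 \<Longrightarrow> t2 < 7 \<Longrightarrow>
   (f1 + 7 - e1) mod 7 = (f2 + 7 - (e2::nat)) mod 7"
proof -
  assume as: "(t1 + e1) mod 7 = (t2 + e2) mod 7" "(t1 + f1) mod 7 = (t2 + f2) mod 7" "e1 < 7" "e2 < 7"
  have d1: "int 7 dvd int (t1 + e1) - int (t2 + e2)" using as(1) unfolding modeq_int .
  have d2: "int 7 dvd int (t1 + f1) - int (t2 + f2)" using as(2) unfolding modeq_int .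
  have "int 7 dvd (int (t1 + f1) - int (t2 + f2)) - (int (t1 + e1) - int (t2 + e2))" using d1 d2 by (rule dvd_diff[rotated])
  moreover have "int (f1 + 7 - e1) - int (f2 + 7 - e2) = (int (t1 + f1) - int (t2 + f2)) - (int (t1 + e1) - int (t2 + e2))"
    using as(3,4) by (simp add: of_nat_diff)
  ultimately have "int 7 dvd int (f1 + 7 - e1) - int (f2 + 7 - e2)" by simp
  thus ?thesis unfolding modeq_int[symmetric] .
qed

lemma m7_1: "s < 7 \<Longrightarrow> e < 7 \<Longrightarrow> ((s + 7 - e) mod 7 + e) mod 7 = (s::nat)"
proof -
  assume as: "s < 7" "e < 7"
  have "((s + 7 - e) mod 7 + e) mod 7 = (s + 7 - e + e) mod 7" by (simp add: mod_add_left_eq)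
  also have "s + 7 - e + e = s + 7" using as by simp
  finally show ?thesis using as by simp
qed

lemma m7_2: "s1 < 7 \<Longrightarrow> s2 < 7 \<Longrightarrow> ea < 7 \<Longrightarrow> eb < 7 \<Longrightarrow> (eb + 7 - ea) mod 7 = (s2 + 7 - s1) mod 7 \<Longrightarrow>
   ((s1 + 7 - ea) mod 7 + eb) mod 7 = (s2::nat)"
proof -
  assume as: "s1 < 7" "s2 < 7" "ea < 7" "eb < 7" "(eb + 7 - ea) mod 7 = (s2 + 7 - s1) mod 7"
  have d: "int 7 dvd int (eb + 7 - ea) - int (s2 + 7 - s1)" using as(5) unfolding modeq_int .
  have "int 7 dvd (int (eb + 7 - ea) - int (s2 + 7 - s1)) + int 7" using d by (rule dvd_add) simp
  moreover have "int (s1 + 7 - ea + eb) - int s2 = (int (eb + 7 - ea) - int (s2 + 7 - s1)) + int 7"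
    using as by (simp add: of_nat_diff)
  ultimately have "int 7 dvd int (s1 + 7 - ea + eb) - int s2" by simp
  hence "(s1 + 7 - ea + eb) mod 7 = s2 mod 7" unfolding modeq_int .
  moreover have "((s1 + 7 - ea) mod 7 + eb) mod 7 = (s1 + 7 - ea + eb) mod 7" by (simp add: mod_add_left_eq)
  ultimately show ?thesis using as by simp
qed

fun vmap :: "nat \<Rightarrow> nat \<Rightarrow> nat \<Rightarrow> vd \<Rightarrow> nat \<times> nat" where
  "vmap y u t (Fin \<beta> b e) = (2 * ((u + \<beta>) mod y) + b, (t + e) mod 7)"
| "vmap y u t (Inf b e) = (2 * y + b, (t + e) mod 7)"

lemma alph_le2: "k < 7 \<Longrightarrow> alph ! k \<le> 2"
proof -
  assume "k < 7"
  have "list_all (\<lambda>v. v \<le> 2) alph" by (simp add: alph_def)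
  thus ?thesis using \<open>k < 7\<close> by (simp add: list_all_length alph_def)
qed

lemma darcs_set: "set (darcs i) = D_arcs i"
  by (simp add: darcs_def D_arcs_def)

lemma Y2: "0 < y \<Longrightarrow> g < y \<Longrightarrow> ((g + y - \<beta> mod y) mod y + \<beta>) mod y = (g::nat)"
proof -
  assume as: "0 < y" "g < y"
  define m where "m = \<beta> mod y"
  have m: "m < y" "\<beta> = y * (\<beta> div y) + m" unfolding m_def using as by auto
  have "((g + y - m) mod y + \<beta>) mod y = (g + y - m + \<beta>) mod y" by (simp add: mod_add_left_eq)
  also have "g + y - m + \<beta> = g + (1 + \<beta> div y) * y" using m by (simp add: algebra_simps)
  also have "(g + (1 + \<beta> div y) * y) mod y = g mod y" by (rule mod_mult_self1)
  also have "g mod y = g" using as by simp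
  finally show ?thesis unfolding m_def .
qed

lemma vmap_FF: "b < 2 \<Longrightarrow> b' < 2 \<Longrightarrow> (vmap y u t (Fin \<beta> b e) = vmap y u' t' (Fin \<beta>' b' e')) =
   ((u + \<beta>) mod y = (u' + \<beta>') mod y \<and> b = b' \<and> (t + e) mod 7 = (t' + e') mod 7)"
  using two_b by auto

lemma vmap_II: "b < 2 \<Longrightarrow> b' < 2 \<Longrightarrow> (vmap y u t (Inf b e) = vmap y u' t' (Inf b' e')) =
   (b = b' \<and> (t + e) mod 7 = (t' + e') mod 7)"
  by auto

lemma vmap_FI: "0 < y \<Longrightarrow> b < 2 \<Longrightarrow> vmap y u t (Fin \<beta> b e) \<noteq> vmap y u' t' (Inf b' e')"
proof
  assume "0 < y" "b < 2" "vmap y u t (Fin \<beta> b e) = vmap y u' t' (Inf b' e')"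
  hence "2 * ((u + \<beta>) mod y) + b = 2 * y + b'" by simp
  moreover have "(u + \<beta>) mod y < y" using \<open>0 < y\<close> by simp
  ultimately show False using \<open>b < 2\<close> by linarith
qed

lemma vmap_FI2: "0 < y \<Longrightarrow> b < 2 \<Longrightarrow> vmap y u' t' (Inf b' e') \<noteq> vmap y u t (Fin \<beta> b e)"
  using vmap_FI by metis

lemma sameInf_gen: "0 < y \<Longrightarrow> vok v1 \<Longrightarrow> vok v2 \<Longrightarrow> vmap y u t v1 = vmap y u' t' v2 \<Longrightarrow> isInf v1 = isInf v2"
proof -
  assume as: "0 < y" "vok v1" "vok v2" "vmap y u t v1 = vmap y u' t' v2"
  show ?thesis
  proof (cases v1)
    case F1: (Fin x b e)
    show ?thesis
    proof (cases v2)
      case (Fin x' b' e') thus ?thesis using F1 by simp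
    next
      case (Inf b' e')
      have "b < 2" using as(2) F1 by simp
      thus ?thesis using F1 Inf as(4) vmap_FI[OF as(1)] by blast
    qed
  next
    case I1: (Inf b e)
    show ?thesis
    proof (cases v2)
      case (Fin x' b' e')
      have "b' < 2" using as(3) Fin by simp
      thus ?thesis using I1 Fin as(4) vmap_FI2[OF as(1)] by blast
    next
      case (Inf b' e') thus ?thesis using I1 by simp
    qed
  qed
qed

lemma vmap_be: "vok v1 \<Longrightarrow> vok v2 \<Longrightarrow> vmap y u t v1 = vmap y u t v2 \<Longrightarrow> 0 < y \<Longrightarrow> vb v1 = vb v2 \<and> ve v1 = ve v2"
proof (cases v1; cases v2)
  fix x1 b1 e1 x2 b2 e2
  assume "vok v1" "vok v2" "vmap y u t v1 = vmap y u t v2" "v1 = Fin x1 b1 e1" "v2 = Fin x2 b2 e2"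
  hence "2 * ((u + x1) mod y) + b1 = 2 * ((u + x2) mod y) + b2" "(t + e1) mod 7 = (t + e2) mod 7" "b1 < 2" "b2 < 2" "e1 < 7" "e2 < 7"
    by auto
  thus ?thesis using two_b[of b1 b2 "(u + x1) mod y" "(u + x2) mod y"] m7_4[of e1 e2 t] \<open>v1 = Fin x1 b1 e1\<close> \<open>v2 = Fin x2 b2 e2\<close>
    by (simp add: add.commute)
next
  fix x1 b1 e1 b2 e2
  assume "vok v1" "vmap y u t v1 = vmap y u t v2" "v1 = Fin x1 b1 e1" "v2 = Inf b2 e2" "0 < y"
  thus ?thesis using vmap_FI by auto
next
  fix b1 e1 x2 b2 e2
  assume "vok v2" "vmap y u t v1 = vmap y u t v2" "v1 = Inf b1 e1" "v2 = Fin x2 b2 e2" "0 < y"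
  thus ?thesis using vmap_FI2 by auto
next
  fix b1 e1 b2 e2
  assume "vok v1" "vok v2" "vmap y u t v1 = vmap y u t v2" "v1 = Inf b1 e1" "v2 = Inf b2 e2"
  thus ?thesis using m7_4[of e1 e2 t] by (simp add: add.commute)
qed

lemma iso_gen:
  assumes inj: "inj_on \<phi> {0..<7}" and sub: "D_arcs i \<subseteq> {0..<7} \<times> {0..<7}"
  shows "digraph_iso (\<phi> ` {0..<7}, (\<lambda>(a,b). (\<phi> a, \<phi> b)) ` D_arcs i) (Dgraph i)"
proof -
  let ?f = "the_inv_into {0..<(7::nat)} \<phi>"
  have bij: "bij_betw ?f (\<phi> ` {0..<7}) {0..<7}"
    by (rule bij_betw_the_inv_into[OF inj_on_imp_bij_betw[OF inj]])
  have ff: "?f (\<phi> a) = a" if "a \<in> {0..<7}" for a using the_inv_into_f_f[OF inj that] .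
  have "(\<lambda>(u,v). (?f u, ?f v)) ` ((\<lambda>(a,b). (\<phi> a, \<phi> b)) ` D_arcs i) = (\<lambda>(a,b). (?f (\<phi> a), ?f (\<phi> b))) ` D_arcs i"
    by (simp add: image_image case_prod_beta)
  also have "\<dots> = (\<lambda>p. p) ` D_arcs i"
  proof (rule image_cong[OF refl])
    fix p assume "p \<in> D_arcs i"
    hence "fst p \<in> {0..<7}" "snd p \<in> {0..<7}" using sub by auto
    thus "(\<lambda>(a,b). (?f (\<phi> a), ?f (\<phi> b))) p = p" using ff by (cases p) auto
  qed
  finally have "(\<lambda>(u,v). (?f u, ?f v)) ` ((\<lambda>(a,b). (\<phi> a, \<phi> b)) ` D_arcs i) = D_arcs i" by simp
  thus ?thesis using bij unfolding digraph_iso_def verts_def arcs_def Dgraph_def by auto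
qed

lemma regs_mem: "((c,a,b) \<in> set (regs i)) = (c < 4 \<and> (a,b) \<in> set (darcs i))"
  by (auto simp: regs_def)

lemma efin_mem: "((n,a,b) \<in> set (efin i)) = (n < 8 \<and> (a,b) \<in> set (darcs i) \<and> \<not> isInf (ext i n a) \<and> \<not> isInf (ext i n b))"
  by (auto simp: efin_def)

lemma spw_mem: "(w \<in> set spw) = ((\<exists>c<4. w = Reg 1 c) \<or> (\<exists>n<8. w = Ext n))"
  by (auto simp: spw_def)

lemma specs_mem: "((w,a,b) \<in> set (specs i)) = (w \<in> set spw \<and> (a,b) \<in> set (darcs i))"
  by (auto simp: specs_def)

lemma outs_mem: "((w,a,b) \<in> set (outs i)) = ((w,a,b) \<in> set (specs i) \<and> isInf (vdesc i True w a))"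
  by (auto simp: outs_def)

lemma ins_mem: "((w,a,b) \<in> set (ins i)) = ((w,a,b) \<in> set (specs i) \<and> isInf (vdesc i True w b))"
  by (auto simp: ins_def)

lemma alllabs_mem: "b1 < 2 \<Longrightarrow> b2 < 2 \<Longrightarrow> d < 7 \<Longrightarrow> (b1,b2,d) \<in> set alllabs"
  apply (simp add: alllabs_def)
  apply (rule bexI[of _ b1], rule bexI[of _ b2], rule rev_image_eqI[of d])
  by auto

lemma inj_distinct: "distinct (map f xs) \<Longrightarrow> p \<in> set xs \<Longrightarrow> q \<in> set xs \<Longrightarrow> f p = f q \<Longrightarrow> p = q"
  by (metis distinct_map inj_onD)

locale dec =
  fixes i y :: nat and fl :: bool
  assumes good: "good i" and yodd: "odd y" and y3: "3 \<le> y"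
begin

lemma gk: "good1 i" "good2 i" "good3 i" "good4 i" "good5 i" "good6 i" "good7 i" "good8 i" "good9 i" "good10 i" "good11 i" "good12 i" "good13 i" "good14 i" "good15 i" "good16 i"
  using good unfolding good_def by simp_all

lemma y0: "0 < y" using y3 by simp

definition validw :: "walk \<Rightarrow> bool" where
  "validw w = (case w of Reg r c \<Rightarrow> 0 < r \<and> r < y \<and> c < 4 | Ext n \<Rightarrow> fl \<and> n < 8)"

definition phi :: "walk \<Rightarrow> nat \<Rightarrow> nat \<Rightarrow> nat \<Rightarrow> nat \<times> nat" where
  "phi w u t k = vmap y u t (vdesc i fl w k)"

definition cp :: "walk \<Rightarrow> nat \<Rightarrow> nat \<Rightarrow> (nat \<times> nat) digraph" where
  "cp w u t = (phi w u t ` {0..<7}, (\<lambda>(a,b). (phi w u t a, phi w u t b)) ` D_arcs i)"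

definition xx :: nat where "xx = (if fl then y + 1 else y)"

lemma G_darcs: "(a,b) \<in> set (darcs i) \<Longrightarrow> a < 7 \<and> b < 7 \<and> alph ! a \<noteq> alph ! b"
proof -
  have "\<forall>(a,b)\<in>set (darcs i). a < 7 \<and> b < 7 \<and> alph ! a \<noteq> alph ! b" using gk(1) unfolding good1_def by blast
  thus "(a,b) \<in> set (darcs i) \<Longrightarrow> ?thesis" by blast
qed

lemma G_pat: "c < 4 \<Longrightarrow> k < 7 \<Longrightarrow> fst (pat i c k) < 2 \<and> snd (pat i c k) < 7"
proof -
  have "\<forall>c\<in>set [0..<4]. \<forall>k\<in>set [0..<7]. fst (pat i c k) < 2 \<and> snd (pat i c k) < 7" using gk(2) unfolding good2_def by blast
  thus "c < 4 \<Longrightarrow> k < 7 \<Longrightarrow> ?thesis" by simp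
qed

lemma G_pd: "c < 4 \<Longrightarrow> k < 7 \<Longrightarrow> l < 7 \<Longrightarrow> k \<noteq> l \<Longrightarrow> pat i c k = pat i c l \<Longrightarrow> alph ! k \<noteq> alph ! l"
proof -
  have "\<forall>c\<in>set [0..<4]. \<forall>k\<in>set [0..<7]. \<forall>l\<in>set [0..<7]. k \<noteq> l \<and> pat i c k = pat i c l \<longrightarrow> alph ! k \<noteq> alph ! l" using gk(3) unfolding good3_def by blast
  thus "c < 4 \<Longrightarrow> k < 7 \<Longrightarrow> l < 7 \<Longrightarrow> k \<noteq> l \<Longrightarrow> pat i c k = pat i c l \<Longrightarrow> ?thesis" by simp
qed

lemma G_rinj: "distinct (map (rlab i) (regs i))" using gk(4) unfolding good4_def by blast
lemma G_rsurj: "set alllabs \<subseteq> set (map (rlab i) (regs i))" using gk(5) unfolding good5_def by blast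

lemma G_jm: "c < 4 \<Longrightarrow> jm i c < 7 \<and> fst (infv i c) < 2 \<and> snd (infv i c) < 7"
proof -
  have "\<forall>c\<in>set [0..<4]. jm i c < 7 \<and> fst (infv i c) < 2 \<and> snd (infv i c) < 7" using gk(6) unfolding good6_def by blast
  thus "c < 4 \<Longrightarrow> ?thesis" by simp
qed

lemma G_extok: "n < 8 \<Longrightarrow> k < 7 \<Longrightarrow> vok (ext i n k)"
proof -
  have "\<forall>n\<in>set [0..<8]. \<forall>k\<in>set [0..<7]. vok (ext i n k)" using gk(7) unfolding good7_def by blast
  thus "n < 8 \<Longrightarrow> k < 7 \<Longrightarrow> ?thesis" by simp
qed

lemma G_extd: "n < 8 \<Longrightarrow> k < 7 \<Longrightarrow> l < 7 \<Longrightarrow> k \<noteq> l \<Longrightarrow> (vb (ext i n k), ve (ext i n k)) \<noteq> (vb (ext i n l), ve (ext i n l))"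
proof -
  have "\<forall>n\<in>set [0..<8]. \<forall>k\<in>set [0..<7]. \<forall>l\<in>set [0..<7]. k \<noteq> l \<longrightarrow> (vb (ext i n k), ve (ext i n k)) \<noteq> (vb (ext i n l), ve (ext i n l))" using gk(8) unfolding good8_def by blast
  thus "n < 8 \<Longrightarrow> k < 7 \<Longrightarrow> l < 7 \<Longrightarrow> k \<noteq> l \<Longrightarrow> ?thesis" by simp
qed

lemma G_efin: "(n,a,b) \<in> set (efin i) \<Longrightarrow> \<exists>c<4. \<exists>a' b'. (a',b') \<in> set (darcs i) \<and> released i c a' b' \<and>
        ext i n a = Fin (alph ! a') (fst (pat i c a')) (snd (pat i c a')) \<and>
        ext i n b = Fin (alph ! b') (fst (pat i c b')) (snd (pat i c b'))"
proof -
  have "\<forall>(n,a,b)\<in>set (efin i). \<exists>c\<in>set [0..<4]. \<exists>(a',b')\<in>set (darcs i). released i c a' b' \<and>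
        ext i n a = Fin (alph ! a') (fst (pat i c a')) (snd (pat i c a')) \<and>
        ext i n b = Fin (alph ! b') (fst (pat i c b')) (snd (pat i c b'))" using gk(9) unfolding good9_def by blast
  thus "(n,a,b) \<in> set (efin i) \<Longrightarrow> ?thesis" by fastforce
qed

lemma G_rel: "c < 4 \<Longrightarrow> (a',b') \<in> set (darcs i) \<Longrightarrow> released i c a' b' \<Longrightarrow> \<exists>n a b. (n,a,b) \<in> set (efin i) \<and>
        ext i n a = Fin (alph ! a') (fst (pat i c a')) (snd (pat i c a')) \<and>
        ext i n b = Fin (alph ! b') (fst (pat i c b')) (snd (pat i c b'))"
proof -
  have "\<forall>c\<in>set [0..<4]. \<forall>(a',b')\<in>set (darcs i). released i c a' b' \<longrightarrow> (\<exists>(n,a,b)\<in>set (efin i).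
        ext i n a = Fin (alph ! a') (fst (pat i c a')) (snd (pat i c a')) \<and>
        ext i n b = Fin (alph ! b') (fst (pat i c b')) (snd (pat i c b')))" using gk(10) unfolding good10_def by blast
  thus "c < 4 \<Longrightarrow> (a',b') \<in> set (darcs i) \<Longrightarrow> released i c a' b' \<Longrightarrow> ?thesis" by fastforce
qed

lemma G_einj: "distinct (map (\<lambda>(n,a,b). (ext i n a, ext i n b)) (efin i))" using gk(11) unfolding good11_def by blast

lemma G_noII: "(w,a,b) \<in> set (specs i) \<Longrightarrow> \<not> (isInf (vdesc i True w a) \<and> isInf (vdesc i True w b))"
proof -
  have "\<forall>(w,a,b)\<in>set (specs i). \<not> (isInf (vdesc i True w a) \<and> isInf (vdesc i True w b))" using gk(12) unfolding good12_def by blast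
  thus "(w,a,b) \<in> set (specs i) \<Longrightarrow> ?thesis" by blast
qed

lemma G_out: "distinct (map (slab i) (outs i))" "set alllabs \<subseteq> set (map (slab i) (outs i))"
  and G_in: "distinct (map (slab i) (ins i))" "set alllabs \<subseteq> set (map (slab i) (ins i))"
  using gk(13-16) unfolding good13_def good14_def good15_def good16_def by blast+

lemma vd_ok: "validw w \<Longrightarrow> k < 7 \<Longrightarrow> vok (vdesc i fl w k)"
proof (cases w)
  case (Reg r c)
  assume "validw w" "k < 7"
  thus ?thesis using Reg G_pat[of c k] G_jm[of c] by (auto simp: validw_def)
next
  case (Ext n)
  assume "validw w" "k < 7"
  thus ?thesis using Ext G_extok[of n k] by (auto simp: validw_def)
qed

lemma inf_spec: "validw w \<Longrightarrow> isInf (vdesc i fl w k) \<Longrightarrow> fl \<and> w \<in> set spw"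
proof (cases w)
  case (Reg r c)
  assume "validw w" "isInf (vdesc i fl w k)"
  thus ?thesis using Reg by (auto simp: validw_def spw_mem split: if_splits)
next
  case (Ext n)
  assume "validw w" "isInf (vdesc i fl w k)"
  thus ?thesis using Ext by (auto simp: validw_def spw_mem)
qed

lemma finrep:
  assumes w: "validw w" and ab: "(a,b) \<in> set (darcs i)"
    and na: "\<not> isInf (vdesc i fl w a)" and nb: "\<not> isInf (vdesc i fl w b)"
  obtains c r a' b' where "c < 4" "0 < r" "r < y" "(a',b') \<in> set (darcs i)"
    "vdesc i fl w a = Fin (alph ! a' * r) (fst (pat i c a')) (snd (pat i c a'))"
    "vdesc i fl w b = Fin (alph ! b' * r) (fst (pat i c b')) (snd (pat i c b'))"
    "(w = Reg r c \<and> a' = a \<and> b' = b) \<or> (fl \<and> r = 1 \<and> (\<exists>n. w = Ext n \<and> (n,a,b) \<in> set (efin i)) \<and> released i c a' b')"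
proof (cases w)
  case (Reg r c)
  have "vdesc i fl w a = Fin (alph ! a * r) (fst (pat i c a)) (snd (pat i c a))"
    using na Reg by (auto split: if_splits)
  moreover have "vdesc i fl w b = Fin (alph ! b * r) (fst (pat i c b)) (snd (pat i c b))"
    using nb Reg by (auto split: if_splits)
  ultimately show ?thesis using that[of c r a b] Reg w ab by (auto simp: validw_def)
next
  case (Ext n)
  have fl: "fl" "n < 8" using w Ext by (auto simp: validw_def)
  have ef: "(n,a,b) \<in> set (efin i)" using na nb Ext fl ab by (simp add: efin_mem)
  then obtain c a' b' where c: "c < 4" "(a',b') \<in> set (darcs i)" "released i c a' b'"
     "ext i n a = Fin (alph ! a') (fst (pat i c a')) (snd (pat i c a'))"
     "ext i n b = Fin (alph ! b') (fst (pat i c b')) (snd (pat i c b'))"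
    using G_efin by blast
  show ?thesis apply (rule that[of c 1 a' b']) using c Ext fl ef y3 by auto
qed

lemma uniq:
  assumes w1: "validw w1" and w2: "validw w2" and u: "u1 < y" "u2 < y" and t: "t1 < 7" "t2 < 7"
    and ab1: "(a1,b1) \<in> set (darcs i)" and ab2: "(a2,b2) \<in> set (darcs i)"
    and ea: "phi w1 u1 t1 a1 = phi w2 u2 t2 a2" and eb: "phi w1 u1 t1 b1 = phi w2 u2 t2 b2"
  shows "w1 = w2 \<and> u1 = u2 \<and> t1 = t2"
proof -
  have r1: "a1 < 7" "b1 < 7" using G_darcs[OF ab1] by auto
  have r2: "a2 < 7" "b2 < 7" using G_darcs[OF ab2] by auto
  have ok: "vok (vdesc i fl w1 a1)" "vok (vdesc i fl w1 b1)" "vok (vdesc i fl w2 a2)" "vok (vdesc i fl w2 b2)"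
    using vd_ok w1 w2 r1 r2 by auto
  have ea': "vmap y u1 t1 (vdesc i fl w1 a1) = vmap y u2 t2 (vdesc i fl w2 a2)" using ea unfolding phi_def .
  have eb': "vmap y u1 t1 (vdesc i fl w1 b1) = vmap y u2 t2 (vdesc i fl w2 b2)" using eb unfolding phi_def .
  have sameInf: "isInf v1 = isInf v2" if "vok v1" "vok v2" "vmap y u1 t1 v1 = vmap y u2 t2 v2" for v1 v2
    using sameInf_gen[OF y0 that] .
  have ia: "isInf (vdesc i fl w1 a1) = isInf (vdesc i fl w2 a2)" using sameInf ok ea' by blast
  have ib: "isInf (vdesc i fl w1 b1) = isInf (vdesc i fl w2 b2)" using sameInf ok eb' by blast
  show ?thesis
  proof (cases "isInf (vdesc i fl w1 a1) \<or> isInf (vdesc i fl w1 b1)")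
    case False
    hence n1: "\<not> isInf (vdesc i fl w1 a1)" "\<not> isInf (vdesc i fl w1 b1)" by auto
    hence n2: "\<not> isInf (vdesc i fl w2 a2)" "\<not> isInf (vdesc i fl w2 b2)" using ia ib by auto
    obtain c1 r1 a1' b1' where R1: "c1 < 4" "0 < r1" "r1 < y" "(a1',b1') \<in> set (darcs i)"
      "vdesc i fl w1 a1 = Fin (alph ! a1' * r1) (fst (pat i c1 a1')) (snd (pat i c1 a1'))"
      "vdesc i fl w1 b1 = Fin (alph ! b1' * r1) (fst (pat i c1 b1')) (snd (pat i c1 b1'))"
      "(w1 = Reg r1 c1 \<and> a1' = a1 \<and> b1' = b1) \<or> (fl \<and> r1 = 1 \<and> (\<exists>n. w1 = Ext n \<and> (n,a1,b1) \<in> set (efin i)) \<and> released i c1 a1' b1')"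
      using finrep[OF w1 ab1 n1] by blast
    obtain c2 r2 a2' b2' where R2: "c2 < 4" "0 < r2" "r2 < y" "(a2',b2') \<in> set (darcs i)"
      "vdesc i fl w2 a2 = Fin (alph ! a2' * r2) (fst (pat i c2 a2')) (snd (pat i c2 a2'))"
      "vdesc i fl w2 b2 = Fin (alph ! b2' * r2) (fst (pat i c2 b2')) (snd (pat i c2 b2'))"
      "(w2 = Reg r2 c2 \<and> a2' = a2 \<and> b2' = b2) \<or> (fl \<and> r2 = 1 \<and> (\<exists>n. w2 = Ext n \<and> (n,a2,b2) \<in> set (efin i)) \<and> released i c2 a2' b2')"
      using finrep[OF w2 ab2 n2] by blast
    have p1: "fst (pat i c1 a1') < 2" "snd (pat i c1 a1') < 7" "fst (pat i c1 b1') < 2" "snd (pat i c1 b1') < 7"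
      using G_pat R1(1) G_darcs[OF R1(4)] by auto
    have p2: "fst (pat i c2 a2') < 2" "snd (pat i c2 a2') < 7" "fst (pat i c2 b2') < 2" "snd (pat i c2 b2') < 7"
      using G_pat R2(1) G_darcs[OF R2(4)] by auto
    have A: "(u1 + alph ! a1' * r1) mod y = (u2 + alph ! a2' * r2) mod y" "fst (pat i c1 a1') = fst (pat i c2 a2')"
       "(t1 + snd (pat i c1 a1')) mod 7 = (t2 + snd (pat i c2 a2')) mod 7"
      using ea' R1(5) R2(5) vmap_FF p1 p2 by auto
    have B: "(u1 + alph ! b1' * r1) mod y = (u2 + alph ! b2' * r2) mod y" "fst (pat i c1 b1') = fst (pat i c2 b2')"
       "(t1 + snd (pat i c1 b1')) mod 7 = (t2 + snd (pat i c2 b2')) mod 7"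
      using eb' R1(6) R2(6) vmap_FF p1 p2 by auto
    have "rlab i (c1,a1',b1') = rlab i (c2,a2',b2')"
      unfolding rlab_def dlab_def using A B m7_3[OF A(3) B(3)] p1 p2 t by simp
    moreover have "(c1,a1',b1') \<in> set (regs i)" "(c2,a2',b2') \<in> set (regs i)" using R1 R2 regs_mem by auto
    ultimately have eq: "c1 = c2" "a1' = a2'" "b1' = b2'" using inj_distinct[OF G_rinj] by blast+
    have tt: "t1 = t2" using m7_4[OF t] A(3) eq by simp
    have al: "alph ! a1' \<le> 2" "alph ! b1' \<le> 2" "alph ! a1' \<noteq> alph ! b1'" using G_darcs[OF R1(4)] alph_le2 by auto
    have "r1 = r2 \<and> u1 = u2"
      using L2[OF yodd al R1(3) R2(3) u] A(1) B(1) eq by (simp add: mult.commute)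
    hence ru: "r1 = r2" "u1 = u2" by auto
    have "w1 = w2"
    proof -
      { assume X: "w1 = Reg r1 c1 \<and> a1' = a1 \<and> b1' = b1" "fl \<and> r2 = 1 \<and> (\<exists>n. w2 = Ext n) \<and> released i c2 a2' b2'"
        hence "a1 = jm i c1 \<or> b1 = jm i c1" using eq released_def by auto
        hence False using n1 X ru by auto }
      moreover
      { assume X: "w2 = Reg r2 c2 \<and> a2' = a2 \<and> b2' = b2" "fl \<and> r1 = 1 \<and> (\<exists>n. w1 = Ext n) \<and> released i c1 a1' b1'"
        hence "a2 = jm i c2 \<or> b2 = jm i c2" using eq released_def by auto
        hence False using n2 X ru by auto }
      moreover
      { fix n1 n2 assume X: "w1 = Ext n1" "(n1,a1,b1) \<in> set (efin i)" "w2 = Ext n2" "(n2,a2,b2) \<in> set (efin i)" "r1 = 1"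
        have "ext i n1 a1 = ext i n2 a2" "ext i n1 b1 = ext i n2 b2" using R1(5,6) R2(5,6) X eq ru by auto
        hence "(n1,a1,b1) = (n2,a2,b2)" using inj_distinct[OF G_einj X(2) X(4)] by simp
        hence "w1 = w2" using X by simp }
      ultimately show ?thesis using R1(7) R2(7) eq ru by blast
    qed
    thus ?thesis using tt ru by simp
  next
    case True
    have flw1: "fl \<and> w1 \<in> set spw" using True inf_spec[OF w1] by auto
    have flw2: "fl \<and> w2 \<in> set spw" using True ia ib inf_spec[OF w2] by auto
    have fl: fl using flw1 by simp
    have S1: "(w1,a1,b1) \<in> set (specs i)" "(w2,a2,b2) \<in> set (specs i)" using flw1 flw2 ab1 ab2 specs_mem by auto
    have vT: "vdesc i fl = vdesc i True" using fl by simp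
    show ?thesis
    proof (cases "isInf (vdesc i fl w1 a1)")
      case True
      hence i2: "isInf (vdesc i fl w2 a2)" using ia by simp
      have nb1: "\<not> isInf (vdesc i fl w1 b1)" and nb2: "\<not> isInf (vdesc i fl w2 b2)" using G_noII S1 True i2 vT by auto
      have O: "(w1,a1,b1) \<in> set (outs i)" "(w2,a2,b2) \<in> set (outs i)" using S1 True i2 vT outs_mem by auto
      obtain ba ea where VA1: "vdesc i fl w1 a1 = Inf ba ea" using True by (cases "vdesc i fl w1 a1") auto
      obtain ba2 ea2 where VA2: "vdesc i fl w2 a2 = Inf ba2 ea2" using i2 by (cases "vdesc i fl w2 a2") auto
      obtain be bb eb where VB1: "vdesc i fl w1 b1 = Fin be bb eb" using nb1 by (cases "vdesc i fl w1 b1") auto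
      obtain be2 bb2 eb2 where VB2: "vdesc i fl w2 b2 = Fin be2 bb2 eb2" using nb2 by (cases "vdesc i fl w2 b2") auto
      have oks: "ba < 2" "ea < 7" "ba2 < 2" "ea2 < 7" "bb < 2" "eb < 7" "bb2 < 2" "eb2 < 7"
        using ok VA1 VA2 VB1 VB2 by auto
      have X1: "ba = ba2" "(t1 + ea) mod 7 = (t2 + ea2) mod 7" using ea' VA1 VA2 vmap_II oks by auto
      have X2: "(u1 + be) mod y = (u2 + be2) mod y" "bb = bb2" "(t1 + eb) mod 7 = (t2 + eb2) mod 7"
        using eb' VB1 VB2 vmap_FF oks by auto
      have "slab i (w1,a1,b1) = slab i (w2,a2,b2)"
        unfolding slab_def dlab_def using vT VA1 VA2 VB1 VB2 X1 X2 m7_3[OF X1(2) X2(3)] oks t by simp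
      hence "(w1,a1,b1) = (w2,a2,b2)" using inj_distinct[OF G_out(1) O] by blast
      hence eqs: "w1 = w2" "a1 = a2" "b1 = b2" by auto
      have "be = be2" "eb = eb2" using VB1 VB2 eqs by auto
      hence "u1 = u2" "t1 = t2" using Y1[OF u] X2 m7_4[OF t] by auto
      thus ?thesis using eqs by simp
    next
      case False
      hence Tb: "isInf (vdesc i fl w1 b1)" using True by simp
      hence i2: "isInf (vdesc i fl w2 b2)" using ib by simp
      have na1: "\<not> isInf (vdesc i fl w1 a1)" and na2: "\<not> isInf (vdesc i fl w2 a2)" using False ia by auto
      have O: "(w1,a1,b1) \<in> set (ins i)" "(w2,a2,b2) \<in> set (ins i)" using S1 Tb i2 vT ins_mem by auto
      obtain bb eb where VB1: "vdesc i fl w1 b1 = Inf bb eb" using Tb by (cases "vdesc i fl w1 b1") auto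
      obtain bb2 eb2 where VB2: "vdesc i fl w2 b2 = Inf bb2 eb2" using i2 by (cases "vdesc i fl w2 b2") auto
      obtain be ba ea where VA1: "vdesc i fl w1 a1 = Fin be ba ea" using na1 by (cases "vdesc i fl w1 a1") auto
      obtain be2 ba2 ea2 where VA2: "vdesc i fl w2 a2 = Fin be2 ba2 ea2" using na2 by (cases "vdesc i fl w2 a2") auto
      have oks: "ba < 2" "ea < 7" "ba2 < 2" "ea2 < 7" "bb < 2" "eb < 7" "bb2 < 2" "eb2 < 7"
        using ok VA1 VA2 VB1 VB2 by auto
      have X1: "bb = bb2" "(t1 + eb) mod 7 = (t2 + eb2) mod 7" using eb' VB1 VB2 vmap_II oks by auto
      have X2: "(u1 + be) mod y = (u2 + be2) mod y" "ba = ba2" "(t1 + ea) mod 7 = (t2 + ea2) mod 7"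
        using ea' VA1 VA2 vmap_FF oks by auto
      have "slab i (w1,a1,b1) = slab i (w2,a2,b2)"
        unfolding slab_def dlab_def using vT VA1 VA2 VB1 VB2 X1 X2 m7_3[OF X2(3) X1(2)] oks t by simp
      hence "(w1,a1,b1) = (w2,a2,b2)" using inj_distinct[OF G_in(1) O] by blast
      hence eqs: "w1 = w2" "a1 = a2" "b1 = b2" by auto
      have "be = be2" "ea = ea2" using VA1 VA2 eqs by auto
      hence "u1 = u2" "t1 = t2" using Y1[OF u] X2 m7_4[OF t] by auto
      thus ?thesis using eqs by simp
    qed
  qed
qed

end

lemma Karcs: "(((j1,s1),(j2,s2)) \<in> arcs (K_minus x)) =
   (j1 < 2*x \<and> j2 < 2*x \<and> s1 < 7 \<and> s2 < 7 \<and> j1 \<noteq> j2 \<and> j1 div 2 \<noteq> j2 div 2)"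
  by (simp add: K_minus_def arcs_def)

lemma Karcs2: "((p, q) \<in> arcs (K_minus x)) =
   (fst p < 2*x \<and> fst q < 2*x \<and> snd p < 7 \<and> snd q < 7 \<and> fst p \<noteq> fst q \<and> fst p div 2 \<noteq> fst q div 2)"
  by (cases p; cases q) (simp add: Karcs)

lemma Kverts: "(v \<in> verts (K_minus x)) = (fst v < 2*x \<and> snd v < 7)"
  by (cases v) (simp add: K_minus_def verts_def)

context dec begin

lemma phi_lt: "validw w \<Longrightarrow> k < 7 \<Longrightarrow> t < 7 \<Longrightarrow> fst (phi w u t k) < 2 * xx \<and> snd (phi w u t k) < 7"
proof -
  assume as: "validw w" "k < 7" "t < 7"
  have ok: "vok (vdesc i fl w k)" using vd_ok as by simp
  show ?thesis
  proof (cases "vdesc i fl w k")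
    case (Fin \<beta> b e)
    have "(u + \<beta>) mod y < y" using y0 by simp
    thus ?thesis using Fin ok unfolding phi_def xx_def by auto
  next
    case (Inf b e)
    hence "fl" using inf_spec[OF as(1), of k] by simp
    thus ?thesis using Inf ok unfolding phi_def xx_def by auto
  qed
qed

lemma grp: "validw w \<Longrightarrow> k < 7 \<Longrightarrow> fst (phi w u t k) div 2 = (if isInf (vdesc i fl w k) then y else (u + (case vdesc i fl w k of Fin \<beta> b e \<Rightarrow> \<beta> | Inf b e \<Rightarrow> 0)) mod y)"
proof -
  assume as: "validw w" "k < 7"
  have ok: "vok (vdesc i fl w k)" using vd_ok as by simp
  thus ?thesis unfolding phi_def by (cases "vdesc i fl w k") auto
qed

lemma arc_ok: "validw w \<Longrightarrow> t < 7 \<Longrightarrow> (a,b) \<in> set (darcs i) \<Longrightarrow> (phi w u t a, phi w u t b) \<in> arcs (K_minus xx)"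
proof -
  assume as: "validw w" "t < 7" "(a,b) \<in> set (darcs i)"
  have ab: "a < 7" "b < 7" using G_darcs[OF as(3)] by auto
  have lt: "fst (phi w u t a) < 2 * xx \<and> snd (phi w u t a) < 7" "fst (phi w u t b) < 2 * xx \<and> snd (phi w u t b) < 7"
    using phi_lt[OF as(1) ab(1) as(2)] phi_lt[OF as(1) ab(2) as(2)] by blast+
  have dv: "fst (phi w u t a) div 2 \<noteq> fst (phi w u t b) div 2"
  proof (cases "isInf (vdesc i fl w a) \<or> isInf (vdesc i fl w b)")
    case False
    hence n: "\<not> isInf (vdesc i fl w a)" "\<not> isInf (vdesc i fl w b)" by auto
    obtain c r a' b' where R: "c < 4" "0 < r" "r < y" "(a',b') \<in> set (darcs i)"
      "vdesc i fl w a = Fin (alph ! a' * r) (fst (pat i c a')) (snd (pat i c a'))"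
      "vdesc i fl w b = Fin (alph ! b' * r) (fst (pat i c b')) (snd (pat i c b'))"
      "(w = Reg r c \<and> a' = a \<and> b' = b) \<or> (fl \<and> r = 1 \<and> (\<exists>n. w = Ext n \<and> (n,a,b) \<in> set (efin i)) \<and> released i c a' b')"
      using finrep[OF as(1) as(3) n] by blast
    have al: "alph ! a' \<le> 2" "alph ! b' \<le> 2" "alph ! a' \<noteq> alph ! b'" using G_darcs[OF R(4)] alph_le2 by auto
    have "(u + alph ! a' * r) mod y \<noteq> (u + alph ! b' * r) mod y" using L1[OF yodd R(2) R(3) al] by (simp add: mult.commute)
    thus ?thesis using grp[OF as(1) ab(1)] grp[OF as(1) ab(2)] R(5,6) by simp
  next
    case True
    hence fw: "fl \<and> w \<in> set spw" using inf_spec[OF as(1), of a] inf_spec[OF as(1), of b] by blast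
    hence "(w,a,b) \<in> set (specs i)" using as(3) by (simp add: specs_mem)
    hence "\<not> (isInf (vdesc i True w a) \<and> isInf (vdesc i True w b))" by (rule G_noII)
    hence nII: "\<not> (isInf (vdesc i fl w a) \<and> isInf (vdesc i fl w b))" using fw by simp
    have lt: "\<And>\<beta>. (u + \<beta>) mod y < y" using y0 by simp
    have ga: "fst (phi w u t a) div 2 = (if isInf (vdesc i fl w a) then y else (u + (case vdesc i fl w a of Fin \<beta> b e \<Rightarrow> \<beta> | Inf b e \<Rightarrow> 0)) mod y)"
      using grp[OF as(1) ab(1)] .
    have gb: "fst (phi w u t b) div 2 = (if isInf (vdesc i fl w b) then y else (u + (case vdesc i fl w b of Fin \<beta> b e \<Rightarrow> \<beta> | Inf b e \<Rightarrow> 0)) mod y)"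
      using grp[OF as(1) ab(2)] .
    show ?thesis
    proof (cases "isInf (vdesc i fl w a)")
      case True
      hence "\<not> isInf (vdesc i fl w b)" using nII by blast
      hence "fst (phi w u t b) div 2 < y" using gb lt by simp
      moreover have "fst (phi w u t a) div 2 = y" using ga True by simp
      ultimately show ?thesis by simp
    next
      case False
      hence "isInf (vdesc i fl w b)" using \<open>isInf (vdesc i fl w a) \<or> isInf (vdesc i fl w b)\<close> by blast
      hence "fst (phi w u t b) div 2 = y" using gb by simp
      moreover have "fst (phi w u t a) div 2 < y" using ga lt False by simp
      ultimately show ?thesis by simp
    qed
  qed
  hence "fst (phi w u t a) \<noteq> fst (phi w u t b)" by auto
  thus ?thesis using lt dv unfolding Karcs2 by simp
qed

lemma phi_inj: "validw w \<Longrightarrow> t < 7 \<Longrightarrow> inj_on (phi w u t) {0..<7}"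
proof (rule inj_onI)
  fix k l assume as: "validw w" "t < 7" "k \<in> {0..<7}" "l \<in> {0..<7}" "phi w u t k = phi w u t l"
  have kl: "k < 7" "l < 7" using as by auto
  have ok: "vok (vdesc i fl w k)" "vok (vdesc i fl w l)" using vd_ok as(1) kl by auto
  have be: "vb (vdesc i fl w k) = vb (vdesc i fl w l) \<and> ve (vdesc i fl w k) = ve (vdesc i fl w l)"
    using vmap_be[OF ok] as(5) y0 unfolding phi_def by blast
  show "k = l"
  proof (rule ccontr)
    assume ne: "k \<noteq> l"
    show False
    proof (cases w)
      case (Ext n)
      have "n < 8" using as(1) Ext by (simp add: validw_def)
      thus False using G_extd[OF _ kl ne] be Ext by auto
    next
      case (Reg r c)
      have rc: "0 < r" "r < y" "c < 4" using as(1) Reg by (auto simp: validw_def)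
      show False
      proof (cases "fl \<and> r = 1 \<and> (k = jm i c \<or> l = jm i c)")
        case True
        hence "(isInf (vdesc i fl w k) \<and> \<not> isInf (vdesc i fl w l)) \<or> (\<not> isInf (vdesc i fl w k) \<and> isInf (vdesc i fl w l))"
          using Reg ne by auto
        thus False using as(5) vmap_FI[OF y0] ok unfolding phi_def
          by (cases "vdesc i fl w k"; cases "vdesc i fl w l") (auto, metis)
      next
        case False
        hence V: "vdesc i fl w k = Fin (alph ! k * r) (fst (pat i c k)) (snd (pat i c k))"
          "vdesc i fl w l = Fin (alph ! l * r) (fst (pat i c l)) (snd (pat i c l))" using Reg by auto
        have "pat i c k = pat i c l" using be V by (simp add: prod_eq_iff)
        hence al: "alph ! k \<noteq> alph ! l" using G_pd[OF rc(3) kl ne] by simp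
        have "(u + alph ! k * r) mod y = (u + alph ! l * r) mod y"
          using as(5) V G_pat[OF rc(3) kl(1)] G_pat[OF rc(3) kl(2)] vmap_FF unfolding phi_def by auto
        thus False using L1[OF yodd rc(1) rc(2) alph_le2[OF kl(1)] alph_le2[OF kl(2)] al] by (simp add: mult.commute)
      qed
    qed
  qed
qed

lemma exist:
  assumes A: "((j1,s1),(j2,s2)) \<in> arcs (K_minus xx)"
  shows "\<exists>w u t a b. validw w \<and> u < y \<and> t < 7 \<and> (a,b) \<in> set (darcs i) \<and> phi w u t a = (j1,s1) \<and> phi w u t b = (j2,s2)"
proof -
  have K: "j1 < 2*xx" "j2 < 2*xx" "s1 < 7" "s2 < 7" "j1 div 2 \<noteq> j2 div 2" using A Karcs by auto
  define g1 where "g1 = j1 div 2"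
  define g2 where "g2 = j2 div 2"
  define b1 where "b1 = j1 mod 2"
  define b2 where "b2 = j2 mod 2"
  have J: "j1 = 2 * g1 + b1" "j2 = 2 * g2 + b2" "b1 < 2" "b2 < 2" unfolding g1_def g2_def b1_def b2_def by auto
  have gne: "g1 \<noteq> g2" using K(5) unfolding g1_def g2_def .
  have gl: "g1 \<le> y" "g2 \<le> y" "\<not> fl \<longrightarrow> g1 < y \<and> g2 < y" using K(1,2) J unfolding xx_def by (auto split: if_splits)
  define d where "d = (s2 + 7 - s1) mod 7"
  have d7: "d < 7" unfolding d_def by simp
  have lab: "(b1,b2,d) \<in> set alllabs" using alllabs_mem J(3,4) d7 by blast
  show ?thesis
  proof (cases "g1 < y \<and> g2 < y")
    case True
    obtain cab where cab: "cab \<in> set (regs i)" "rlab i cab = (b1,b2,d)" using lab G_rsurj by force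
    obtain c a b where cab_eq: "cab = (c,a,b)" by (cases cab) auto
    have cr: "c < 4" "(a,b) \<in> set (darcs i)" using cab cab_eq regs_mem by auto
    have ab7: "a < 7" "b < 7" using G_darcs[OF cr(2)] by auto
    have P: "fst (pat i c a) < 2" "snd (pat i c a) < 7" "fst (pat i c b) < 2" "snd (pat i c b) < 7"
      using G_pat cr(1) ab7 by auto
    have labeq: "fst (pat i c a) = b1" "fst (pat i c b) = b2" "(snd (pat i c b) + 7 - snd (pat i c a)) mod 7 = d"
      using cab(2) cab_eq unfolding rlab_def dlab_def by auto
    have al: "alph ! a \<le> 2" "alph ! b \<le> 2" "alph ! a \<noteq> alph ! b" using G_darcs[OF cr(2)] alph_le2 by auto
    obtain r u where ru: "0 < r" "r < y" "u < y" "(u + alph ! a * r) mod y = g1" "(u + alph ! b * r) mod y = g2"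
      using L3[OF yodd al _ _ gne] True by blast
    define t where "t = (s1 + 7 - snd (pat i c a)) mod 7"
    have t7: "t < 7" unfolding t_def by simp
    have st1: "(t + snd (pat i c a)) mod 7 = s1" unfolding t_def using m7_1 K(3) P(2) by simp
    have st2: "(t + snd (pat i c b)) mod 7 = s2" unfolding t_def using m7_2[OF K(3) K(4) P(2) P(4)] labeq(3) d_def by simp
    show ?thesis
    proof (cases "fl \<and> r = 1 \<and> released i c a b")
      case True
      obtain n a2 b2' where E: "(n,a2,b2') \<in> set (efin i)"
        "ext i n a2 = Fin (alph ! a) (fst (pat i c a)) (snd (pat i c a))"
        "ext i n b2' = Fin (alph ! b) (fst (pat i c b)) (snd (pat i c b))"
        using G_rel[OF cr True[THEN conjunct2, THEN conjunct2]] by blast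
      have E2: "n < 8" "(a2,b2') \<in> set (darcs i)" using E(1) efin_mem by auto
      have vw: "validw (Ext n)" unfolding validw_def using True E2 by simp
      have "phi (Ext n) u t a2 = (j1,s1)" "phi (Ext n) u t b2' = (j2,s2)"
        unfolding phi_def using E(2,3) ru True J labeq st1 st2 by auto
      thus ?thesis using vw ru(3) t7 E2(2) by blast
    next
      case False
      have vw: "validw (Reg r c)" using ru cr by (simp add: validw_def)
      have nf: "\<not> (fl \<and> r = 1 \<and> a = jm i c)" "\<not> (fl \<and> r = 1 \<and> b = jm i c)" using False released_def by auto
      have "phi (Reg r c) u t a = (j1,s1)" "phi (Reg r c) u t b = (j2,s2)"
        unfolding phi_def using nf ru J labeq st1 st2 by (auto simp: mult.commute)
      thus ?thesis using vw ru(3) t7 cr(2) by blast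
    qed
  next
    case False
    hence fl: fl using gl by blast
    show ?thesis
    proof (cases "g1 = y")
      case True
      have g2y: "g2 < y" using True gne gl by auto
      obtain wab where wab: "wab \<in> set (outs i)" "slab i wab = (b1,b2,d)" using lab G_out(2) by force
      obtain w a b where wab_eq: "wab = (w,a,b)" by (cases wab) auto
      have S: "(w,a,b) \<in> set (specs i)" "isInf (vdesc i True w a)" using wab wab_eq outs_mem by auto
      have sp: "w \<in> set spw" "(a,b) \<in> set (darcs i)" using S(1) specs_mem by auto
      have vw: "validw w" unfolding validw_def using sp(1) fl y3 spw_mem by auto
      have vT: "vdesc i fl = vdesc i True" using fl by simp
      have nb: "\<not> isInf (vdesc i True w b)" using G_noII S by auto
      have ab7: "a < 7" "b < 7" using G_darcs[OF sp(2)] by auto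
      obtain ba ea where VA: "vdesc i True w a = Inf ba ea" using S(2) by (cases "vdesc i True w a") auto
      obtain be bb eb where VB: "vdesc i True w b = Fin be bb eb" using nb by (cases "vdesc i True w b") auto
      have oks: "ba < 2" "ea < 7" "bb < 2" "eb < 7" using vd_ok[OF vw ab7(1)] vd_ok[OF vw ab7(2)] VA VB vT by auto
      have labeq: "ba = b1" "bb = b2" "(eb + 7 - ea) mod 7 = d" using wab(2) wab_eq VA VB unfolding slab_def dlab_def by auto
      define t where "t = (s1 + 7 - ea) mod 7"
      define u where "u = (g2 + y - be mod y) mod y"
      have t7: "t < 7" unfolding t_def by simp
      have u7: "u < y" unfolding u_def using y0 by simp
      have st1: "(t + ea) mod 7 = s1" unfolding t_def using m7_1 K(3) oks by simp
      have st2: "(t + eb) mod 7 = s2" unfolding t_def using m7_2[OF K(3) K(4) oks(2) oks(4)] labeq(3) d_def by simp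
      have ug: "(u + be) mod y = g2" unfolding u_def using Y2[OF y0 g2y] .
      have "phi w u t a = (j1,s1)" "phi w u t b = (j2,s2)"
        unfolding phi_def using vT VA VB st1 st2 ug J labeq True by auto
      thus ?thesis using vw u7 t7 sp(2) by blast
    next
      case False
      hence g1y: "g1 < y" using gl by auto
      have g2y: "g2 = y" using \<open>\<not> (g1 < y \<and> g2 < y)\<close> g1y gl by auto
      obtain wab where wab: "wab \<in> set (ins i)" "slab i wab = (b1,b2,d)" using lab G_in(2) by force
      obtain w a b where wab_eq: "wab = (w,a,b)" by (cases wab) auto
      have S: "(w,a,b) \<in> set (specs i)" "isInf (vdesc i True w b)" using wab wab_eq ins_mem by auto
      have sp: "w \<in> set spw" "(a,b) \<in> set (darcs i)" using S(1) specs_mem by auto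
      have vw: "validw w" unfolding validw_def using sp(1) fl y3 spw_mem by auto
      have vT: "vdesc i fl = vdesc i True" using fl by simp
      have na: "\<not> isInf (vdesc i True w a)" using G_noII S by auto
      have ab7: "a < 7" "b < 7" using G_darcs[OF sp(2)] by auto
      obtain bb eb where VB: "vdesc i True w b = Inf bb eb" using S(2) by (cases "vdesc i True w b") auto
      obtain be ba ea where VA: "vdesc i True w a = Fin be ba ea" using na by (cases "vdesc i True w a") auto
      have oks: "ba < 2" "ea < 7" "bb < 2" "eb < 7" using vd_ok[OF vw ab7(1)] vd_ok[OF vw ab7(2)] VA VB vT by auto
      have labeq: "ba = b1" "bb = b2" "(eb + 7 - ea) mod 7 = d" using wab(2) wab_eq VA VB unfolding slab_def dlab_def by auto
      define t where "t = (s1 + 7 - ea) mod 7"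
      define u where "u = (g1 + y - be mod y) mod y"
      have t7: "t < 7" unfolding t_def by simp
      have u7: "u < y" unfolding u_def using y0 by simp
      have st1: "(t + ea) mod 7 = s1" unfolding t_def using m7_1 K(3) oks by simp
      have st2: "(t + eb) mod 7 = s2" unfolding t_def using m7_2[OF K(3) K(4) oks(2) oks(4)] labeq(3) d_def by simp
      have ug: "(u + be) mod y = g1" unfolding u_def using Y2[OF y0 g1y] .
      have "phi w u t a = (j1,s1)" "phi w u t b = (j2,s2)"
        unfolding phi_def using vT VA VB st1 st2 ug J labeq g2y by auto
      thus ?thesis using vw u7 t7 sp(2) by blast
    qed
  qed
qed

lemma Darcs_sub: "D_arcs i \<subseteq> {0..<7} \<times> {0..<7}"
  using G_darcs darcs_set by fastforce

theorem main: "is_decomposition (Dgraph i) (K_minus xx) {cp w u t | w u t. validw w \<and> u < y \<and> t < 7}"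
  unfolding is_decomposition_def
proof (intro conjI ballI)
  fix S assume "S \<in> {cp w u t | w u t. validw w \<and> u < y \<and> t < 7}"
  then obtain w u t where S: "S = cp w u t" "validw w" "u < y" "t < 7" by blast
  have inj: "inj_on (phi w u t) {0..<7}" using phi_inj S by simp
  have "verts S \<subseteq> verts (K_minus xx)"
  proof
    fix v assume "v \<in> verts S"
    then obtain k where k: "k < 7" "v = phi w u t k" using S(1) unfolding cp_def verts_def by auto
    thus "v \<in> verts (K_minus xx)" using phi_lt[OF S(2) k(1) S(4)] Kverts by simp
  qed
  moreover have "arcs S \<subseteq> arcs (K_minus xx)"
    using S arc_ok unfolding cp_def darcs_set[symmetric] by (auto simp: arcs_def)
  moreover have "arcs S \<subseteq> verts S \<times> verts S"
    using S Darcs_sub unfolding cp_def by (auto simp: arcs_def verts_def)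
  ultimately show "subdigraph S (K_minus xx)" unfolding subdigraph_def by simp
  show "digraph_iso S (Dgraph i)" using iso_gen[OF inj Darcs_sub] S(1) unfolding cp_def by simp
next
  fix e assume e: "e \<in> arcs (K_minus xx)"
  obtain j1 s1 j2 s2 where ee: "e = ((j1,s1),(j2,s2))" by (cases e) auto
  obtain w u t a b where W: "validw w" "u < y" "t < 7" "(a,b) \<in> set (darcs i)" "phi w u t a = (j1,s1)" "phi w u t b = (j2,s2)"
    using exist e ee by blast
  show "\<exists>!S. S \<in> {cp w u t | w u t. validw w \<and> u < y \<and> t < 7} \<and> e \<in> arcs S"
  proof (rule ex1I[of _ "cp w u t"])
    show "cp w u t \<in> {cp w u t | w u t. validw w \<and> u < y \<and> t < 7} \<and> e \<in> arcs (cp w u t)"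
      using W ee darcs_set unfolding cp_def arcs_def by force
  next
    fix S assume "S \<in> {cp w u t | w u t. validw w \<and> u < y \<and> t < 7} \<and> e \<in> arcs S"
    then obtain w' u' t' where S: "S = cp w' u' t'" "validw w'" "u' < y" "t' < 7" "e \<in> arcs (cp w' u' t')" by blast
    then obtain a' b' where ab': "(a',b') \<in> set (darcs i)" "e = (phi w' u' t' a', phi w' u' t' b')"
      unfolding cp_def arcs_def darcs_set[symmetric] by auto
    have "w' = w \<and> u' = u \<and> t' = t"
      using uniq[OF S(2) W(1) S(3) W(2) S(4) W(3) ab'(1) W(4)] ab'(2) ee W(5,6) by simp
    thus "S = cp w u t" using S(1) by simp
  qed
qed

end

lemma good_i: "i \<in> {1..8} \<Longrightarrow> good i"
  using good_all by (simp add: list_all_iff)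

theorem lemma3p1:
  fixes x i :: nat
  assumes "x \<ge> 3" and "1 \<le> i" and "i \<le> 8"
  shows "\<exists>\<D>. is_decomposition (Dgraph i) (K_minus x) \<D>"
proof (cases "odd x")
  case True
  interpret d: dec i x False using good_i assms True by unfold_locales auto
  have "d.xx = x" unfolding d.xx_def by simp
  thus ?thesis using d.main by metis
next
  case False
  have y: "odd (x - 1)" "3 \<le> x - 1" using False assms(1) by (auto simp: dvd_def) presburger+
  interpret d: dec i "x - 1" True using good_i assms y by unfold_locales auto
  have "d.xx = x" unfolding d.xx_def using assms(1) by simp
  thus ?thesis using d.main by metis
qed

end
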